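(* Let $P$ be an $n\times n$ doubly stochastic matrix satisfying the pattern-symmetry condition $p_{ij}>0\Leftrightarrow p_{ji}>0$ for all $i\neq j$. If $P$ is SIA, then $P$ is a Sarymsakov matrix (i.e., $P\in\mathcal S_1$).
   Context: $\mathcal N=\{1,\ldots,n\}$. A matrix is stochastic if it is entrywise nonnegative with row sums $1$, and doubly stochastic if in addition its column sums are $1$. A stochastic $P$ is SIA if $\lim_{m\to\infty}P^m=\mathbf 1c^T$ for some nonnegative $c$ with entries summing to $1$. For stochastic $P$ and $\mathcal A\subseteq\mathcal N$, $F_P(\mathcal A)=\{j:\ p_{ij}>0\text{ for some } i\in\mathcal A\}$. A Sarymsakov matrix is a stochastic $P$ such that for any disjoint nonempty $\mathcal A,\tilde{\mathcal A}\subseteq\mathcal N$, either $F_P(\mathcal A)\cap F_P(\tilde{\mathcal A})\neq\emptyset$, or $F_P(\mathcal A)\cap F_P(\tilde{\mathcal A})=\emptyset$ and $|F_P(\mathcal A)\cup F_P(\tilde{\mathcal A})|>|\mathcal A\cup\tilde{\mathcal A}|$. *)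

theory Defs
  imports "HOL-Analysis.Analysis"
begin

definition stochastic :: "real^'n^'n \<Rightarrow> bool" where
  "stochastic P \<longleftrightarrow> (\<forall>i j. P $ i $ j \<ge> 0) \<and> (\<forall>i. (\<Sum>j\<in>UNIV. P $ i $ j) = 1)"

definition doubly_stochastic :: "real^'n^'n \<Rightarrow> bool" where
  "doubly_stochastic P \<longleftrightarrow> stochastic P \<and> (\<forall>j. (\<Sum>i\<in>UNIV. P $ i $ j) = 1)"

primrec mat_pow :: "real^'n^'n \<Rightarrow> nat \<Rightarrow> real^'n^'n" where
  "mat_pow P 0 = mat 1"
| "mat_pow P (Suc m) = mat_pow P m ** P"

definition SIA :: "real^'n^'n \<Rightarrow> bool" where
  "SIA P \<longleftrightarrow> stochastic P \<and>
     (\<exists>c :: real^'n. (\<forall>j. c $ j \<ge> 0) \<and> (\<Sum>j\<in>UNIV. c $ j) = 1 \<and>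
        (\<lambda>m. mat_pow P m) \<longlonglongrightarrow> (\<chi> i j. c $ j))"

definition F_set :: "real^'n^'n \<Rightarrow> 'n set \<Rightarrow> 'n set" where
  "F_set P A = {j. \<exists>i\<in>A. P $ i $ j > 0}"

definition sarymsakov :: "real^'n^'n \<Rightarrow> bool" where
  "sarymsakov P \<longleftrightarrow> stochastic P \<and>
     (\<forall>A B :: 'n set. A \<noteq> {} \<longrightarrow> B \<noteq> {} \<longrightarrow> A \<inter> B = {} \<longrightarrow>
        F_set P A \<inter> F_set P B \<noteq> {} \<or>
        (F_set P A \<inter> F_set P B = {} \<and> card (F_set P A \<union> F_set P B) > card (A \<union> B)))"

end

theory Submission
  imports Defs
begin

lemma mat_pow_col:
  assumes "doubly_stochastic P"
  shows "(\<Sum>i\<in>UNIV. mat_pow P m $ i $ k) = 1"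
proof (induction m arbitrary: k)
  case 0
  then show ?case by (simp add: mat_def)
next
  case (Suc m)
  have "(\<Sum>i\<in>UNIV. mat_pow P (Suc m) $ i $ k)
      = (\<Sum>i\<in>UNIV. \<Sum>j\<in>UNIV. mat_pow P m $ i $ j * P $ j $ k)"
    by (simp add: matrix_matrix_mult_def)
  also have "\<dots> = (\<Sum>j\<in>UNIV. (\<Sum>i\<in>UNIV. mat_pow P m $ i $ j) * P $ j $ k)"
    by (subst sum.swap) (simp add: sum_distrib_right)
  also have "\<dots> = 1" using Suc assms by (simp add: doubly_stochastic_def)
  finally show ?case .
qed

lemma mat_pow_support:
  assumes st: "stochastic P" and XY: "F_set P X \<subseteq> Y" and YX: "F_set P Y \<subseteq> X"
  shows "\<forall>i k. mat_pow P m $ i $ k \<noteq> 0 \<longrightarrow>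
     (i\<in>X \<longrightarrow> k \<in> (if even m then X else Y)) \<and> (i\<in>Y \<longrightarrow> k \<in> (if even m then Y else X))"
proof (induction m)
  case 0
  then show ?case by (simp add: mat_def)
next
  case (Suc m)
  show ?case
  proof (intro allI impI)
    fix i k assume nz: "mat_pow P (Suc m) $ i $ k \<noteq> 0"
    then have "(\<Sum>j\<in>UNIV. mat_pow P m $ i $ j * P $ j $ k) \<noteq> 0"
      by (simp add: matrix_matrix_mult_def)
    then obtain j where j1: "mat_pow P m $ i $ j \<noteq> 0" and j2: "P $ j $ k \<noteq> 0"
      by (metis (no_types, lifting) mult_eq_0_iff sum.neutral)
    have pos: "P $ j $ k > 0" using j2 st unfolding stochastic_def
      by (metis order_le_less)
    have kX: "j \<in> X \<Longrightarrow> k \<in> Y" using XY pos unfolding F_set_def by blast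
    have kY: "j \<in> Y \<Longrightarrow> k \<in> X" using YX pos unfolding F_set_def by blast
    show "(i\<in>X \<longrightarrow> k \<in> (if even (Suc m) then X else Y)) \<and> (i\<in>Y \<longrightarrow> k \<in> (if even (Suc m) then Y else X))"
      using Suc.IH j1 kX kY by (auto split: if_splits)
  qed
qed

lemma no_trap:
  assumes ds: "doubly_stochastic P" and sia: "SIA P"
    and XY: "F_set P X \<subseteq> Y" and YX: "F_set P Y \<subseteq> X" and i: "i \<in> X" and k: "k \<notin> X"
  shows False
proof -
  have st: "stochastic P" using ds by (simp add: doubly_stochastic_def)
  obtain c :: "real^'a" where lim: "(\<lambda>m. mat_pow P m) \<longlonglongrightarrow> (\<chi> i j. c $ j)"
    using sia unfolding SIA_def by blast
  have lim2: "\<And>a b. (\<lambda>m. mat_pow P m $ a $ b) \<longlonglongrightarrow> c $ b"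
  proof -
    fix a b
    have "(\<lambda>m. mat_pow P m $ a) \<longlonglongrightarrow> (\<chi> i j. c $ j) $ a"
      by (rule tendsto_vec_nth[OF lim])
    hence "(\<lambda>m. mat_pow P m $ a $ b) \<longlonglongrightarrow> (\<chi> i j. c $ j) $ a $ b"
      by (rule tendsto_vec_nth)
    thus "(\<lambda>m. mat_pow P m $ a $ b) \<longlonglongrightarrow> c $ b" by simp
  qed
  have "(\<lambda>m. \<Sum>a\<in>UNIV. mat_pow P m $ a $ k) \<longlonglongrightarrow> (\<Sum>a\<in>(UNIV::'a set). c $ k)"
    by (rule tendsto_sum) (rule lim2)
  hence "(\<lambda>m. 1::real) \<longlonglongrightarrow> (\<Sum>a\<in>(UNIV::'a set). c $ k)"
    using mat_pow_col[OF ds] by simp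
  hence "(\<Sum>a\<in>(UNIV::'a set). c $ k) = 1"
    using LIMSEQ_unique tendsto_const by blast
  hence ck: "c $ k \<noteq> 0" by auto
  have z: "\<And>m. mat_pow P (2*m) $ i $ k = 0"
    using mat_pow_support[OF st XY YX, of "2*_"] i k by fastforce
  have "((\<lambda>m. mat_pow P m $ i $ k) \<circ> (\<lambda>m. 2*m)) \<longlonglongrightarrow> c $ k"
    by (rule LIMSEQ_subseq_LIMSEQ[OF lim2]) (simp add: strict_mono_def)
  hence "(\<lambda>m. 0::real) \<longlonglongrightarrow> c $ k" using z by (simp add: comp_def)
  hence "c $ k = 0" using LIMSEQ_unique tendsto_const by blast
  with ck show False by simp
qed

lemma card_F:
  assumes ds: "doubly_stochastic P"
  shows "card X \<le> card (F_set P X)"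
    and "card (F_set P X) = card X \<Longrightarrow> i \<notin> X \<Longrightarrow> j \<in> F_set P X \<Longrightarrow> P $ i $ j = 0"
proof -
  have nn: "\<And>i j. P $ i $ j \<ge> 0" using ds by (simp add: doubly_stochastic_def stochastic_def)
  have rs: "\<And>i. (\<Sum>j\<in>UNIV. P $ i $ j) = 1" using ds by (simp add: doubly_stochastic_def stochastic_def)
  have cs: "\<And>j. (\<Sum>i\<in>UNIV. P $ i $ j) = 1" using ds by (simp add: doubly_stochastic_def)
  have out: "\<And>i j. i \<in> X \<Longrightarrow> j \<notin> F_set P X \<Longrightarrow> P $ i $ j = 0"
    using nn unfolding F_set_def by (metis (mono_tags, lifting) mem_Collect_eq order_le_less)
  have "real (card X) = (\<Sum>i\<in>X. \<Sum>j\<in>UNIV. P $ i $ j)" using rs by simp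
  also have "\<dots> = (\<Sum>i\<in>X. \<Sum>j\<in>F_set P X. P $ i $ j)"
    by (rule sum.cong[OF refl], rule sum.mono_neutral_right) (auto simp: out)
  also have "\<dots> = (\<Sum>j\<in>F_set P X. \<Sum>i\<in>X. P $ i $ j)" by (rule sum.swap)
  finally have e1: "real (card X) = (\<Sum>j\<in>F_set P X. \<Sum>i\<in>X. P $ i $ j)" .
  have "real (card (F_set P X)) = (\<Sum>j\<in>F_set P X. \<Sum>i\<in>UNIV. P $ i $ j)" using cs by simp
  also have "\<dots> = (\<Sum>j\<in>F_set P X. (\<Sum>i\<in>X. P $ i $ j) + (\<Sum>i\<in>-X. P $ i $ j))"
  proof (rule sum.cong[OF refl])
    fix j
    have "(\<Sum>i\<in>X \<union> -X. P $ i $ j) = (\<Sum>i\<in>X. P $ i $ j) + (\<Sum>i\<in>-X. P $ i $ j)"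
      by (rule sum.union_disjoint) auto
    thus "(\<Sum>i\<in>UNIV. P $ i $ j) = (\<Sum>i\<in>X. P $ i $ j) + (\<Sum>i\<in>-X. P $ i $ j)" by simp
  qed
  also have "\<dots> = real (card X) + (\<Sum>j\<in>F_set P X. \<Sum>i\<in>-X. P $ i $ j)"
    by (simp add: sum.distrib e1)
  finally have e2: "real (card (F_set P X)) = real (card X) + (\<Sum>j\<in>F_set P X. \<Sum>i\<in>-X. P $ i $ j)" .
  have ge: "(\<Sum>j\<in>F_set P X. \<Sum>i\<in>-X. P $ i $ j) \<ge> 0" by (intro sum_nonneg) (simp add: nn)
  show "card X \<le> card (F_set P X)" using e2 ge by linarith
  assume eq: "card (F_set P X) = card X" and iX: "i \<notin> X" and jF: "j \<in> F_set P X"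
  have "(\<Sum>j\<in>F_set P X. \<Sum>i\<in>-X. P $ i $ j) = 0" using e2 eq by simp
  hence "(\<Sum>i\<in>-X. P $ i $ j) = 0" using jF
    by (subst (asm) sum_nonneg_eq_0_iff) (auto intro: sum_nonneg simp: nn)
  thus "P $ i $ j = 0" using iX
    by (subst (asm) sum_nonneg_eq_0_iff) (auto simp: nn)
qed

lemma F_union: "F_set P (A \<union> B) = F_set P A \<union> F_set P B"
  unfolding F_set_def by auto

lemma closed_univ:
  assumes ds: "doubly_stochastic P" and sia: "SIA P"
    and sym: "\<forall>i j. i \<noteq> j \<longrightarrow> (P $ i $ j > 0 \<longleftrightarrow> P $ j $ i > 0)"
    and ne: "A \<noteq> {}" and eq: "card (F_set P A) = card A"
  shows "A \<union> F_set P A = UNIV"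
proof (rule ccontr)
  assume nu: "A \<union> F_set P A \<noteq> UNIV"
  let ?D = "F_set P A"
  have "F_set P ?D \<subseteq> A \<union> ?D"
  proof
    fix k assume "k \<in> F_set P ?D"
    then obtain j where jD: "j \<in> ?D" and pjk: "P $ j $ k > 0" unfolding F_set_def by blast
    show "k \<in> A \<union> ?D"
    proof (cases "k = j")
      case True thus ?thesis using jD by simp
    next
      case False
      hence "P $ k $ j > 0" using sym pjk by blast
      thus ?thesis using card_F(2)[OF ds eq _ jD, of k] by force
    qed
  qed
  hence cl: "F_set P (A \<union> ?D) \<subseteq> A \<union> ?D" using F_union[of P A ?D] by (auto simp: F_set_def)
  obtain i where i: "i \<in> A" using ne by blast
  obtain k where k: "k \<notin> A \<union> ?D" using nu by blast
  show False using no_trap[OF ds sia cl cl, of i k] i k by blast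
qed

theorem proposition4:
  fixes P :: "real^'n^'n"
  assumes "doubly_stochastic P"
    and "\<forall>i j. i \<noteq> j \<longrightarrow> (P $ i $ j > 0 \<longleftrightarrow> P $ j $ i > 0)"
    and "SIA P"
  shows "sarymsakov P"
  unfolding sarymsakov_def
proof (intro conjI allI impI)
  show "stochastic P" using assms(1) by (simp add: doubly_stochastic_def)
  fix A B :: "'n set"
  assume nA: "A \<noteq> {}" and nB: "B \<noteq> {}" and dAB: "A \<inter> B = {}"
  show "F_set P A \<inter> F_set P B \<noteq> {} \<or>
        (F_set P A \<inter> F_set P B = {} \<and> card (F_set P A \<union> F_set P B) > card (A \<union> B))"
  proof (rule ccontr)
    assume "\<not> ?thesis"
    hence dF: "F_set P A \<inter> F_set P B = {}" and le: "card (F_set P A \<union> F_set P B) \<le> card (A \<union> B)"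
      by auto
    have "card (F_set P A) + card (F_set P B) \<le> card A + card B"
      using le dF dAB by (simp add: card_Un_disjoint)
    moreover have "card A \<le> card (F_set P A)" "card B \<le> card (F_set P B)"
      using card_F(1)[OF assms(1)] by auto
    ultimately have eA: "card (F_set P A) = card A" and eB: "card (F_set P B) = card B" by auto
    have uA: "A \<union> F_set P A = UNIV" by (rule closed_univ[OF assms(1) assms(3) assms(2) nA eA])
    have uB: "B \<union> F_set P B = UNIV" by (rule closed_univ[OF assms(1) assms(3) assms(2) nB eB])
    have FA: "F_set P A \<subseteq> B" using uB dF by blast
    have FB: "F_set P B \<subseteq> A" using uA dF by blast
    obtain i where i: "i \<in> A" using nA by blast
    obtain k where k: "k \<in> B" using nB by blast
    show False using no_trap[OF assms(1) assms(3) FA FB i, of k] k dAB by blast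
  qed
qed

end
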